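(* Let $G=(V,E)$ be a connected simple graph with $|V|\ge2$. Then $$\varepsilon(G)\le\frac12\sum_{v\in V}\varepsilon(G\setminus v),$$ where $G\setminus v$ is the subgraph induced on $V\setminus\{v\}$.
   Context: For an undirected simple graph $G=(V,E)$, $\varepsilon(G)$ denotes the maximum, over all acyclic orientations of $E$, of the number of linear extensions of the partial order induced on $V$ (where $u<v$ iff there is a directed path from $u$ to $v$; a linear extension of a poset on an $n$-element set is an order-preserving bijection onto $[n]$). *)

theory Defs
  imports Complex_Main
begin

definition simple_graph :: "'a set \<Rightarrow> 'a set set \<Rightarrow> bool" where
  "simple_graph V E \<longleftrightarrow> finite V \<and> (\<forall>e\<in>E. e \<subseteq> V \<and> card e = 2)"

definition adj_rel :: "'a set set \<Rightarrow> ('a \<times> 'a) set" where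
  "adj_rel E = {(u, v). {u, v} \<in> E}"

definition connected_graph :: "'a set \<Rightarrow> 'a set set \<Rightarrow> bool" where
  "connected_graph V E \<longleftrightarrow> (\<forall>u\<in>V. \<forall>w\<in>V. (u, w) \<in> (adj_rel E)\<^sup>*)"

definition orientation :: "'a set set \<Rightarrow> ('a \<times> 'a) set \<Rightarrow> bool" where
  "orientation E D \<longleftrightarrow>
     (\<forall>(u, v)\<in>D. {u, v} \<in> E) \<and>
     (\<forall>e\<in>E. \<forall>u v. e = {u, v} \<longrightarrow> ((u, v) \<in> D \<longleftrightarrow> (v, u) \<notin> D))"

definition acyclic_orientations :: "'a set set \<Rightarrow> ('a \<times> 'a) set set" where
  "acyclic_orientations E = {D. orientation E D \<and> acyclic D}"

definition linear_extensions :: "'a set \<Rightarrow> ('a \<times> 'a) set \<Rightarrow> ('a \<Rightarrow> nat) set" where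
  "linear_extensions V D =
     {f. bij_betw f V {1..card V} \<and>
         (\<forall>u\<in>V. \<forall>v\<in>V. (u, v) \<in> D\<^sup>+ \<longrightarrow> f u < f v) \<and>
         (\<forall>x. x \<notin> V \<longrightarrow> f x = 0)}"

definition eps :: "'a set \<Rightarrow> 'a set set \<Rightarrow> nat" where
  "eps V E = Max ((\<lambda>D. card (linear_extensions V D)) ` acyclic_orientations E)"

definition delete_vertex_edges :: "'a set set \<Rightarrow> 'a \<Rightarrow> 'a set set" where
  "delete_vertex_edges E v = {e\<in>E. v \<notin> e}"

end

theory Submission
  imports Defs
begin

lemma ao_fin:
  assumes "simple_graph V E"
  shows "finite (acyclic_orientations E)"
proof -
  have "acyclic_orientations E \<subseteq> Pow (V \<times> V)"
  proof
    fix D assume "D \<in> acyclic_orientations E"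
    hence "\<forall>(u, v)\<in>D. {u, v} \<in> E" by (simp add: acyclic_orientations_def orientation_def)
    with assms show "D \<in> Pow (V \<times> V)" by (fastforce simp: simple_graph_def)
  qed
  moreover have "finite V" using assms by (simp add: simple_graph_def)
  ultimately show ?thesis by (meson finite_Pow_iff finite_SigmaI finite_subset)
qed

lemma ao_ne:
  assumes "simple_graph V E"
  shows "acyclic_orientations E \<noteq> {}"
proof -
  have fin: "finite V" using assms by (simp add: simple_graph_def)
  obtain h :: "'a \<Rightarrow> nat" and n where h: "inj_on h V" using finite_imp_inj_to_nat_seg[OF fin] by blast
  define D where "D = {(u,v). {u,v} \<in> E \<and> h u < h v}"
  have "orientation E D"
    unfolding orientation_def
  proof (intro conjI ballI allI impI)
    show "\<And>x. x \<in> D \<Longrightarrow> case x of (u, v) \<Rightarrow> {u, v} \<in> E" by (auto simp: D_def)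
  next
    fix e u v assume e: "e \<in> E" and euv: "e = {u, v}"
    have "card e = 2" "e \<subseteq> V" using assms e by (auto simp: simple_graph_def)
    hence uv: "u \<noteq> v" "u \<in> V" "v \<in> V" using euv by (auto simp: card_insert_if split: if_splits)
    hence "h u \<noteq> h v" using h by (meson inj_onD)
    then show "((u, v) \<in> D) = ((v, u) \<notin> D)" using e euv by (auto simp: D_def insert_commute)
  qed
  moreover have "acyclic D"
  proof -
    have "D \<subseteq> inv_image less_than h" by (auto simp: D_def)
    moreover have "wf (inv_image less_than h)" by simp
    ultimately show ?thesis by (meson wf_acyclic wf_subset)
  qed
  ultimately show ?thesis by (auto simp: acyclic_orientations_def)
qed

lemma LE_fin:
  assumes "finite V"
  shows "finite (linear_extensions V D)"
proof -
  have "linear_extensions V D \<subseteq> {f. \<forall>x. (x \<in> V \<longrightarrow> f x \<in> {1..card V}) \<and> (x \<notin> V \<longrightarrow> f x = 0)}"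
    by (auto simp: linear_extensions_def bij_betw_def)
  then show ?thesis using finite_set_of_finite_funs[OF assms, of "{1..card V}" 0]
    by (meson finite_atLeastAtMost finite_subset)
qed

lemma restrict_ao:
  assumes "D \<in> acyclic_orientations E"
  shows "{(a,b)\<in>D. a\<noteq>v \<and> b\<noteq>v} \<in> acyclic_orientations (delete_vertex_edges E v)"
proof -
  have o: "orientation E D" and a: "acyclic D" using assms by (auto simp: acyclic_orientations_def)
  have "orientation (delete_vertex_edges E v) {(a,b)\<in>D. a\<noteq>v \<and> b\<noteq>v}"
    using o unfolding orientation_def delete_vertex_edges_def by fastforce
  moreover have "acyclic {(a,b)\<in>D. a\<noteq>v \<and> b\<noteq>v}" using a by (rule acyclic_subset) auto
  ultimately show ?thesis by (simp add: acyclic_orientations_def)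
qed

lemma LE_first:
  assumes fin: "finite V" and v: "v \<in> V" and f: "f \<in> linear_extensions V D" and fv: "f v = 1"
  shows "(\<lambda>x. if x = v then 0 else f x - 1) \<in> linear_extensions (V-{v}) {(a,b)\<in>D. a\<noteq>v \<and> b\<noteq>v}"
proof -
  have bij: "bij_betw f V {1..card V}" and ord: "\<forall>u\<in>V. \<forall>w\<in>V. (u, w) \<in> D\<^sup>+ \<longrightarrow> f u < f w"
    and out: "\<forall>x. x \<notin> V \<longrightarrow> f x = 0" using f by (auto simp: linear_extensions_def)
  have cV: "card (V - {v}) = card V - 1" using v fin by simp
  have b1: "bij_betw f (V - {v}) ({1..card V} - {1})"
  proof (rule bij_betw_DiffI[OF bij])
    show "bij_betw f {v} {1}" using fv by (simp add: bij_betw_def)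
    show "{v} \<subseteq> V" using v by simp
    have "card V > 0" using v fin card_gt_0_iff by blast
    then show "{1} \<subseteq> {1..card V}" by simp
  qed
  have b2: "bij_betw (\<lambda>k. k - 1) ({1..card V} - {1}) {1..card V - 1}"
    unfolding bij_betw_def
  proof
    show "inj_on (\<lambda>k. k - 1) ({1..card V} - {1})" by (auto simp: inj_on_def)
    show "(\<lambda>k. k - 1) ` ({1..card V} - {1}) = {1..card V - 1}"
    proof
      show "(\<lambda>k. k - 1) ` ({1..card V} - {1}) \<subseteq> {1..card V - 1}" by auto
      show "{1..card V - 1} \<subseteq> (\<lambda>k. k - 1) ` ({1..card V} - {1})"
      proof
        fix k assume "k \<in> {1..card V - 1}"
        hence "Suc k \<in> {1..card V} - {1}" "k = Suc k - 1" by auto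
        thus "k \<in> (\<lambda>k. k - 1) ` ({1..card V} - {1})" by blast
      qed
    qed
  qed
  have b3: "bij_betw (\<lambda>x. f x - 1) (V - {v}) {1..card V - 1}"
    using bij_betw_trans[OF b1 b2] by (simp add: comp_def)
  have b4: "bij_betw (\<lambda>x. if x = v then 0 else f x - 1) (V - {v}) {1..card (V - {v})}"
    unfolding cV by (rule bij_betw_cong[THEN iffD1, rotated, OF b3]) auto
  have ge2: "\<And>x. x \<in> V - {v} \<Longrightarrow> f x \<ge> 2"
  proof -
    fix x assume x: "x \<in> V - {v}"
    hence "f x \<in> {1..card V}" "f x \<noteq> f v" using bij v
      by (auto simp: bij_betw_def inj_on_def)
    thus "f x \<ge> 2" using fv by auto
  qed
  have ord2: "\<forall>u\<in>V-{v}. \<forall>w\<in>V-{v}. (u, w) \<in> {(a,b)\<in>D. a\<noteq>v \<and> b\<noteq>v}\<^sup>+ \<longrightarrow>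
      (if u = v then 0 else f u - 1) < (if w = v then 0 else f w - 1)"
  proof (intro ballI impI)
    fix u w assume u: "u \<in> V - {v}" and w: "w \<in> V - {v}" and uw: "(u, w) \<in> {(a,b)\<in>D. a\<noteq>v \<and> b\<noteq>v}\<^sup>+"
    have "(u, w) \<in> D\<^sup>+" using uw by (rule trancl_mono) auto
    hence "f u < f w" using ord u w by auto
    thus "(if u = v then 0 else f u - 1) < (if w = v then 0 else f w - 1)"
      using u w ge2[OF u] by auto
  qed
  show ?thesis unfolding linear_extensions_def using b4 ord2 out by auto
qed

lemma LE_last:
  assumes fin: "finite V" and v: "v \<in> V" and f: "f \<in> linear_extensions V D" and fv: "f v = card V"
  shows "(\<lambda>x. if x = v then 0 else f x) \<in> linear_extensions (V-{v}) {(a,b)\<in>D. a\<noteq>v \<and> b\<noteq>v}"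
proof -
  have bij: "bij_betw f V {1..card V}" and ord: "\<forall>u\<in>V. \<forall>w\<in>V. (u, w) \<in> D\<^sup>+ \<longrightarrow> f u < f w"
    and out: "\<forall>x. x \<notin> V \<longrightarrow> f x = 0" using f by (auto simp: linear_extensions_def)
  have cV: "card (V - {v}) = card V - 1" using v fin by simp
  have cpos: "card V \<ge> 1" using v fin by (metis card_0_eq empty_iff less_one not_le)
  have b1: "bij_betw f (V - {v}) ({1..card V} - {card V})"
  proof (rule bij_betw_DiffI[OF bij])
    show "bij_betw f {v} {card V}" using fv by (simp add: bij_betw_def)
    show "{v} \<subseteq> V" using v by simp
    show "{card V} \<subseteq> {1..card V}" using cpos by simp
  qed
  have e: "{1..card V} - {card V} = {1..card V - 1}" using cpos by auto
  have b4: "bij_betw (\<lambda>x. if x = v then 0 else f x) (V - {v}) {1..card (V - {v})}"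
    unfolding cV e[symmetric] by (rule bij_betw_cong[THEN iffD1, rotated, OF b1]) auto
  have ord2: "\<forall>u\<in>V-{v}. \<forall>w\<in>V-{v}. (u, w) \<in> {(a,b)\<in>D. a\<noteq>v \<and> b\<noteq>v}\<^sup>+ \<longrightarrow>
      (if u = v then 0 else f u) < (if w = v then 0 else f w)"
  proof (intro ballI impI)
    fix u w assume u: "u \<in> V - {v}" and w: "w \<in> V - {v}" and uw: "(u, w) \<in> {(a,b)\<in>D. a\<noteq>v \<and> b\<noteq>v}\<^sup>+"
    have "(u, w) \<in> D\<^sup>+" using uw by (rule trancl_mono) auto
    hence "f u < f w" using ord u w by auto
    thus "(if u = v then 0 else f u) < (if w = v then 0 else f w)"
      using u w by auto
  qed
  show ?thesis unfolding linear_extensions_def using b4 ord2 out by auto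
qed


theorem mainTheorem11:
  fixes V :: "'a set" and E :: "'a set set"
  assumes "simple_graph V E"
    and "connected_graph V E"
    and "card V \<ge> 2"
  shows "real (eps V E) \<le> (1/2) * (\<Sum>v\<in>V. real (eps (V - {v}) (delete_vertex_edges E v)))"
proof -
  have fin: "finite V" using assms(1) by (simp add: simple_graph_def)
  obtain D0 where D0: "D0 \<in> acyclic_orientations E" and epsD0: "eps V E = card (linear_extensions V D0)"
  proof -
    have "eps V E \<in> (\<lambda>D. card (linear_extensions V D)) ` acyclic_orientations E"
      unfolding eps_def using ao_fin[OF assms(1)] ao_ne[OF assms(1)] by (intro Max_in) auto
    thus ?thesis using that by auto
  qed
  have orD0: "orientation E D0" using D0 by (simp add: acyclic_orientations_def)
  define L where "L = linear_extensions V D0"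
  define A where "A v = {f\<in>L. f v = 1}" for v
  define B where "B v = {f\<in>L. f v = card V}" for v
  define e' where "e' v = eps (V - {v}) (delete_vertex_edges E v)" for v
  have finL: "finite L" unfolding L_def using LE_fin[OF fin] .
  have cpos: "1 \<le> card V" using assms(3) by simp
  have LA: "L = (\<Union>v\<in>V. A v)"
  proof
    show "L \<subseteq> (\<Union>v\<in>V. A v)"
    proof
      fix f assume f: "f \<in> L"
      hence "f ` V = {1..card V}" by (simp add: L_def linear_extensions_def bij_betw_def)
      hence "1 \<in> f ` V" using cpos by auto
      then obtain v where "v \<in> V" "f v = 1" by auto
      thus "f \<in> (\<Union>v\<in>V. A v)" using f by (auto simp: A_def)
    qed
  qed (auto simp: A_def)
  have LB: "L = (\<Union>v\<in>V. B v)"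
  proof
    show "L \<subseteq> (\<Union>v\<in>V. B v)"
    proof
      fix f assume f: "f \<in> L"
      hence "f ` V = {1..card V}" by (simp add: L_def linear_extensions_def bij_betw_def)
      hence "card V \<in> f ` V" using cpos by auto
      then obtain v where "v \<in> V" "f v = card V" by auto
      thus "f \<in> (\<Union>v\<in>V. B v)" using f by (auto simp: B_def)
    qed
  qed (auto simp: B_def)
  have injL: "\<And>f. f \<in> L \<Longrightarrow> inj_on f V" by (simp add: L_def linear_extensions_def bij_betw_def)
  have cA: "card L = (\<Sum>v\<in>V. card (A v))"
    unfolding LA
  proof (rule card_UN_disjoint[OF fin])
    show "\<forall>v\<in>V. finite (A v)" using finL by (auto simp: A_def)
    show "\<forall>i\<in>V. \<forall>j\<in>V. i \<noteq> j \<longrightarrow> A i \<inter> A j = {}"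
      using injL by (auto simp: A_def inj_on_def)
  qed
  have cB: "card L = (\<Sum>v\<in>V. card (B v))"
    unfolding LB
  proof (rule card_UN_disjoint[OF fin])
    show "\<forall>v\<in>V. finite (B v)" using finL by (auto simp: B_def)
    show "\<forall>i\<in>V. \<forall>j\<in>V. i \<noteq> j \<longrightarrow> B i \<inter> B j = {}"
      using injL by (auto simp: B_def inj_on_def)
  qed
  have key: "card (A v) + card (B v) \<le> e' v" if v: "v \<in> V" for v
  proof -
    define D' where "D' = {(a,b)\<in>D0. a\<noteq>v \<and> b\<noteq>v}"
    let ?L' = "linear_extensions (V - {v}) D'"
    have sg: "simple_graph (V - {v}) (delete_vertex_edges E v)"
      using assms(1) by (auto simp: simple_graph_def delete_vertex_edges_def)
    have D'ao: "D' \<in> acyclic_orientations (delete_vertex_edges E v)"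
      unfolding D'_def using restrict_ao[OF D0] .
    have le': "card ?L' \<le> e' v"
      unfolding e'_def eps_def
      by (rule Max_ge) (use ao_fin[OF sg] D'ao in auto)
    have finL': "finite ?L'" using LE_fin fin by blast
    have cA': "card (A v) \<le> card ?L'"
    proof (rule card_inj_on_le[OF _ _ finL'])
      show "inj_on (\<lambda>f. \<lambda>x. if x = v then 0 else f x - 1) (A v)"
      proof (rule inj_onI)
        fix f g assume f: "f \<in> A v" and g: "g \<in> A v"
          and eq: "(\<lambda>x. if x = v then 0 else f x - 1) = (\<lambda>x. if x = v then 0 else g x - 1)"
        show "f = g"
        proof
          fix x
          show "f x = g x"
          proof (cases "x = v")
            case True thus ?thesis using f g by (simp add: A_def)
          next
            case False
            hence e1: "f x - 1 = g x - 1" using fun_cong[OF eq, of x] by simp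
            show ?thesis
            proof (cases "x \<in> V")
              case True
              have "f x \<in> {1..card V}" "g x \<in> {1..card V}" using True f g
                by (auto simp: A_def L_def linear_extensions_def bij_betw_def)
              thus ?thesis using e1 by auto
            next
              case False thus ?thesis using f g by (simp add: A_def L_def linear_extensions_def)
            qed
          qed
        qed
      qed
      show "(\<lambda>f. \<lambda>x. if x = v then 0 else f x - 1) ` A v \<subseteq> ?L'"
        using LE_first[OF fin v] unfolding D'_def A_def L_def by blast
    qed
    have cB': "card (B v) \<le> card ?L'"
    proof (rule card_inj_on_le[OF _ _ finL'])
      show "inj_on (\<lambda>f. \<lambda>x. if x = v then 0 else f x) (B v)"
      proof (rule inj_onI)
        fix f g assume f: "f \<in> B v" and g: "g \<in> B v"
          and eq: "(\<lambda>x. if x = v then 0 else f x) = (\<lambda>x. if x = v then 0 else g x)"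
        show "f = g"
        proof
          fix x
          show "f x = g x"
            using f g fun_cong[OF eq, of x] by (cases "x = v") (auto simp: B_def)
        qed
      qed
      show "(\<lambda>f. \<lambda>x. if x = v then 0 else f x) ` B v \<subseteq> ?L'"
        using LE_last[OF fin v] unfolding D'_def B_def L_def by blast
    qed
    obtain w where w: "w \<in> V" "w \<noteq> v"
    proof -
      have "\<not> V \<subseteq> {v}"
      proof
        assume "V \<subseteq> {v}"
        hence "card V \<le> card {v}" by (intro card_mono) auto
        thus False using assms(3) by simp
      qed
      thus ?thesis using that by blast
    qed
    have "(v, w) \<in> (adj_rel E)\<^sup>*" using assms(2) v w by (simp add: connected_graph_def)
    then obtain y where "(v, y) \<in> adj_rel E"
      using w(2) by (metis converse_rtranclE)
    hence vy: "{v, y} \<in> E" by (simp add: adj_rel_def)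
    hence yV: "y \<in> V" using assms(1) by (auto simp: simple_graph_def)
    have dir: "(v, y) \<in> D0 \<or> (y, v) \<in> D0" using orD0 vy unfolding orientation_def by blast
    have "A v = {} \<or> B v = {}"
    proof (cases "(y, v) \<in> D0")
      case True
      have "A v = {}"
      proof (rule ccontr)
        assume "A v \<noteq> {}"
        then obtain f where f: "f \<in> L" "f v = 1" by (auto simp: A_def)
        have "\<forall>u\<in>V. \<forall>w\<in>V. (u, w) \<in> D0\<^sup>+ \<longrightarrow> f u < f w" using f by (simp add: L_def linear_extensions_def)
        hence "f y < f v" using True yV v r_into_trancl[of y v D0] by blast
        moreover have "f y \<in> {1..card V}" using f yV by (auto simp: L_def linear_extensions_def bij_betw_def)
        ultimately show False using f by simp
      qed
      thus ?thesis ..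
    next
      case False
      hence vyD: "(v, y) \<in> D0" using dir by blast
      have "B v = {}"
      proof (rule ccontr)
        assume "B v \<noteq> {}"
        then obtain f where f: "f \<in> L" "f v = card V" by (auto simp: B_def)
        have "\<forall>u\<in>V. \<forall>w\<in>V. (u, w) \<in> D0\<^sup>+ \<longrightarrow> f u < f w" using f by (simp add: L_def linear_extensions_def)
        hence "f v < f y" using vyD yV v r_into_trancl[of v y D0] by blast
        moreover have "f y \<in> {1..card V}" using f yV by (auto simp: L_def linear_extensions_def bij_betw_def)
        ultimately show False using f by simp
      qed
      thus ?thesis ..
    qed
    thus ?thesis using cA' cB' le' by auto
  qed
  have "2 * card L \<le> (\<Sum>v\<in>V. e' v)"
  proof -
    have "2 * card L = (\<Sum>v\<in>V. card (A v) + card (B v))"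
      using cA cB by (simp add: sum.distrib)
    also have "\<dots> \<le> (\<Sum>v\<in>V. e' v)" using key by (rule sum_mono)
    finally show ?thesis .
  qed
  hence "real (2 * card L) \<le> real (\<Sum>v\<in>V. e' v)" by linarith
  thus ?thesis unfolding epsD0 L_def[symmetric] e'_def by (simp add: of_nat_sum)
qed

end
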